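(* Let $d \geq 1$ and let $\Sigma$ be a $d \times d$ positive semidefinite matrix with $\operatorname{Tr}(\Sigma) = 1$. Let $f(\boldsymbol{z}) = \boldsymbol{w}^T\boldsymbol{z} + \boldsymbol{b}$ be a binary linear classifier with $\boldsymbol{w} \in \mathbb{R}^d\setminus\{\boldsymbol{0}\}$, $\boldsymbol{b} \in \mathbb{R}$, and let $\boldsymbol{x} \in \mathbb{R}^d$ with $f(\boldsymbol{x}) \neq 0$. Then for every $0 < \varepsilon < \frac{1}{3}$, \[ \sqrt{\frac{1}{2\ln(1/\varepsilon)}}\;\frac{\|\boldsymbol{w}\|_2}{\|\sqrt{\Sigma}\boldsymbol{w}\|_2} \leq \frac{r_{\Sigma,\varepsilon}(\boldsymbol{x})}{\|\boldsymbol{r}^*_2(\boldsymbol{x})\|_2} \leq \sqrt{\frac{1}{1 - \sqrt{3\varepsilon}}}\;\frac{\|\boldsymbol{w}\|_2}{\|\sqrt{\Sigma}\boldsymbol{w}\|_2}. \]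
   Context: The predicted label is $g(\boldsymbol{z}) = 1$ if $f(\boldsymbol{z}) > 0$ and $g(\boldsymbol{z}) = 0$ otherwise. $\sqrt{\Sigma}$ is the symmetric positive semidefinite square root of $\Sigma$. Let $\boldsymbol{v} \sim \mathcal{N}(\boldsymbol{0}, \Sigma)$. For $\varepsilon > 0$, $r_{\Sigma,\varepsilon}(\boldsymbol{x}) = \inf\{|\alpha| : \alpha\in\mathbb{R},\ \mathbb{P}_{\boldsymbol{v}}\{g(\boldsymbol{x}+\alpha\boldsymbol{v}) \neq g(\boldsymbol{x})\} \geq \varepsilon\}$, with $\inf\emptyset = +\infty$. Also $\|\boldsymbol{r}^*_2(\boldsymbol{x})\|_2 = \inf\{\|\boldsymbol{r}\|_2 : g(\boldsymbol{x}+\boldsymbol{r}) \neq g(\boldsymbol{x})\}$, the Euclidean distance from $\boldsymbol{x}$ to the decision boundary. A fraction with zero denominator is read as $+\infty$. *)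

theory Defs
  imports "HOL-Analysis.Analysis"
begin

definition psd_matrix :: "real^'n^'n \<Rightarrow> bool" where
  "psd_matrix A \<longleftrightarrow> transpose A = A \<and> (\<forall>x. 0 \<le> x \<bullet> (A *v x))"

definition psd_sqrt :: "real^'n^'n \<Rightarrow> real^'n^'n" where
  "psd_sqrt A = (THE S. psd_matrix S \<and> S ** S = A)"

definition std_gaussian :: "(real^'n) measure" where
  "std_gaussian = density lborel
     (\<lambda>z. ennreal ((2 * pi) powr (- real CARD('n) / 2) * exp (- (norm z)\<^sup>2 / 2)))"

text \<open>The Gaussian N(0, Sigma), realised as the law of sqrt(Sigma) g with g standard Gaussian.\<close>
definition gaussian :: "real^'n^'n \<Rightarrow> (real^'n) measure" where
  "gaussian \<Sigma> = distr std_gaussian borel (\<lambda>z. psd_sqrt \<Sigma> *v z)"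

definition lin_f :: "real^'n \<Rightarrow> real \<Rightarrow> real^'n \<Rightarrow> real" where
  "lin_f w b z = w \<bullet> z + b"

definition lin_label :: "real^'n \<Rightarrow> real \<Rightarrow> real^'n \<Rightarrow> nat" where
  "lin_label w b z = (if lin_f w b z > 0 then 1 else 0)"

text \<open>Gaussian robustness radius r_{Sigma,eps}(x) (Inf of empty set is +infinity).\<close>
definition noise_radius :: "real^'n \<Rightarrow> real \<Rightarrow> real^'n^'n \<Rightarrow> real \<Rightarrow> real^'n \<Rightarrow> ereal" where
  "noise_radius w b \<Sigma> \<epsilon> x =
     Inf {ereal \<bar>\<alpha>\<bar> | \<alpha>. measure (gaussian \<Sigma>)
            {v \<in> space (gaussian \<Sigma>). lin_label w b (x + \<alpha> *\<^sub>R v) \<noteq> lin_label w b x} \<ge> \<epsilon>}"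

definition boundary_dist :: "real^'n \<Rightarrow> real \<Rightarrow> real^'n \<Rightarrow> real" where
  "boundary_dist w b x = Inf {norm r | r. lin_label w b (x + r) \<noteq> lin_label w b x}"

definition efrac :: "ereal \<Rightarrow> real \<Rightarrow> ereal" where
  "efrac a c = (if c = 0 then \<infinity> else a / ereal c)"

end

theory Submission
  imports Defs "HOL-Probability.Probability"
begin

lemma quad_zero:
  fixes a k :: real
  assumes "\<And>t. 0 \<le> 2*t*a + t^2*k" "0 \<le> a"
  shows "a = 0"
proof -
  define K where "K = \<bar>k\<bar> + 1"
  have K: "K > 0" "k - 2*K < 0" by (auto simp: K_def)
  have "0 \<le> 2*(-a/K)*a + (-a/K)^2*k" using assms(1) .
  also have "2*(-a/K)*a + (-a/K)^2*k = a^2 * (k - 2*K) / K^2"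
    using K by (simp add: field_simps power2_eq_square)
  finally have "0 \<le> a^2 * (k - 2*K)" using K by (simp add: zero_le_divide_iff)
  have "a^2 = 0"
  proof (rule ccontr)
    assume "a^2 \<noteq> 0"
    hence "a^2 > 0" by simp
    hence "a^2 * (k - 2*K) < 0" using K by (intro mult_pos_neg) auto
    thus False using \<open>0 \<le> a^2 * (k - 2*K)\<close> by simp
  qed
  thus ?thesis by simp
qed

lemma psd_kernel:
  fixes h :: "'a::real_inner \<Rightarrow> 'a"
  assumes lin: "linear h" and sym: "\<And>x y. inner x (h y) = inner (h x) y"
    and pos: "\<And>x. 0 \<le> inner x (h x)" and z: "inner x (h x) = 0"
  shows "h x = 0"
proof -
  define y where "y = h x"
  have "inner y y = 0"
  proof (rule quad_zero[where k = "inner y (h y)"])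
    fix t :: real
    have "0 \<le> inner (x + t *\<^sub>R y) (h (x + t *\<^sub>R y))" by (rule pos)
    also have "\<dots> = inner x (h x) + t * inner x (h y) + t * inner y (h x) + t^2 * inner y (h y)"
      by (simp add: linear_add[OF lin] linear_scale[OF lin] inner_add_left inner_add_right
          power2_eq_square algebra_simps)
    also have "inner x (h y) = inner y y" using sym[of x y] by (simp add: y_def inner_commute)
    finally show "0 \<le> 2*t*inner y y + t^2 * inner y (h y)" using z by (simp add: y_def)
  qed simp
  thus ?thesis by (simp add: y_def)
qed

lemma orthonormal_inner_sum:
  fixes B :: "'a::real_inner set"
  assumes "finite B" "pairwise orthogonal B" "e' \<in> B" "norm e' = 1"
  shows "inner e' (\<Sum>e\<in>B. c e *\<^sub>R e) = c e'"
proof -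
  have "inner e' (\<Sum>e\<in>B. c e *\<^sub>R e) = (\<Sum>e\<in>B. c e * inner e' e)"
    by (simp add: inner_sum_right)
  also have "\<dots> = c e' * inner e' e' + (\<Sum>e\<in>B - {e'}. c e * inner e' e)"
    using assms by (simp add: sum.remove)
  also have "(\<Sum>e\<in>B - {e'}. c e * inner e' e) = 0"
    using assms(2,3) by (intro sum.neutral) (auto simp: pairwise_def orthogonal_def)
  also have "inner e' e' = 1" using assms(4) by (simp add: dot_square_norm)
  finally show ?thesis by simp
qed

lemma eig_ext:
  fixes h :: "'a::euclidean_space \<Rightarrow> 'a"
  assumes lin: "linear h" and sym: "\<And>x y. inner x (h y) = inner (h x) y"
    and eig: "\<And>e. e \<in> B \<Longrightarrow> \<exists>l. h e = l *\<^sub>R e"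
    and r: "\<forall>e\<in>B. inner e r = 0" "r \<noteq> 0"
  shows "\<exists>e0. (\<forall>e\<in>B. inner e e0 = 0) \<and> norm e0 = 1 \<and> (\<exists>l. h e0 = l *\<^sub>R e0)"
proof -
  define V where "V = {y. \<forall>e\<in>B. inner e y = 0}"
  have subV: "subspace V" unfolding subspace_def V_def by (auto simp: inner_add_right)
  have clV: "closed V" using closed_subspace[OF subV] .
  define K where "K = sphere 0 1 \<inter> V"
  have cK: "compact K" unfolding K_def using compact_sphere clV by blast
  have rK: "r /\<^sub>R norm r \<in> K" using r subV by (auto simp: K_def V_def)
  hence neK: "K \<noteq> {}" by auto
  have bl: "bounded_linear h" using lin by (simp add: linear_conv_bounded_linear)
  have cont: "continuous_on K (\<lambda>y. inner y (h y))"
    by (intro continuous_intros linear_continuous_on bl)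
  obtain y0 where y0: "y0 \<in> K" "\<And>y. y\<in>K \<Longrightarrow> inner y (h y) \<le> inner y0 (h y0)"
    using continuous_attains_sup[OF cK neK cont] by auto
  define M where "M = inner y0 (h y0)"
  have y0V: "y0 \<in> V" and ny0: "norm y0 = 1" using y0(1) by (auto simp: K_def)
  have inv: "h y \<in> V" if "y \<in> V" for y
  proof -
    have "inner e (h y) = 0" if "e \<in> B" for e
    proof -
      obtain l where "h e = l *\<^sub>R e" using eig \<open>e \<in> B\<close> by blast
      hence "inner e (h y) = l * inner e y" using sym[of e y] by simp
      thus ?thesis using \<open>y \<in> V\<close> \<open>e \<in> B\<close> by (simp add: V_def)
    qed
    thus ?thesis by (simp add: V_def)
  qed
  have bound: "inner y (h y) \<le> M * (norm y)^2" if "y \<in> V" for y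
  proof (cases "y = 0")
    case True thus ?thesis by (simp add: linear_0[OF lin])
  next
    case False
    have "y /\<^sub>R norm y \<in> K" using that False subV by (auto simp: K_def subspace_scale)
    hence "inner (y /\<^sub>R norm y) (h (y /\<^sub>R norm y)) \<le> M" unfolding M_def by (rule y0(2))
    moreover have "h (y /\<^sub>R norm y) = inverse (norm y) *\<^sub>R h y" using linear_scale[OF lin] by blast
    ultimately have "inner y (h y) / (norm y)^2 \<le> M"
      by (simp add: linear_scale[OF lin] power2_eq_square divide_simps)
    thus ?thesis using False by (simp add: divide_simps)
  qed
  define z where "z = M *\<^sub>R y0 - h y0"
  have zV: "z \<in> V" unfolding z_def using subV y0V inv by (intro subspace_diff subspace_scale) auto
  define g where "g y = M * (norm y)^2 - inner y (h y)" for y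
  have gpos: "0 \<le> g y" if "y \<in> V" for y using bound[OF that] by (simp add: g_def)
  have "inner z z = 0"
  proof (rule quad_zero[where k = "g z"])
    fix t :: real
    have "y0 + t *\<^sub>R z \<in> V" using subV y0V zV by (intro subspace_add subspace_scale) auto
    hence "0 \<le> g (y0 + t *\<^sub>R z)" by (rule gpos)
    also have "g (y0 + t *\<^sub>R z) = 2*t*inner z z + t^2 * g z"
    proof -
      have n: "(norm v)^2 = inner v v" for v :: 'a by (simp add: dot_square_norm)
      have key: "inner z (h y0) = M * inner y0 z - inner z z"
        by (simp add: z_def inner_diff_left inner_diff_right inner_commute algebra_simps)
      have s: "inner y0 (h z) = inner z (h y0)" using sym[of y0 z] by (simp add: inner_commute)
      have yy: "inner y0 y0 = 1" using ny0 by (simp add: dot_square_norm)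
      have zy: "inner z y0 = inner y0 z" by (simp add: inner_commute)
      have hM: "inner y0 (h y0) = M" by (simp add: M_def)
      have e1: "h (y0 + t *\<^sub>R z) = h y0 + t *\<^sub>R h z"
        by (simp add: linear_add[OF lin] linear_scale[OF lin])
      show ?thesis
        unfolding g_def n e1
        by (simp add: inner_add_left inner_add_right yy zy hM s key power2_eq_square algebra_simps)
    qed
    finally show "0 \<le> 2*t*inner z z + t^2 * g z" .
  qed simp
  hence "h y0 = M *\<^sub>R y0" by (simp add: z_def)
  thus ?thesis using y0V ny0 by (auto simp: V_def)
qed

lemma spectral:
  fixes h :: "'a::euclidean_space \<Rightarrow> 'a"
  assumes lin: "linear h" and sym: "\<And>x y. inner x (h y) = inner (h x) y"
  shows "\<exists>B. finite B \<and> (\<forall>e\<in>B. norm e = 1 \<and> (\<exists>l. h e = l *\<^sub>R e)) \<and> pairwise orthogonal B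
             \<and> (\<forall>x. x = (\<Sum>e\<in>B. inner e x *\<^sub>R e))"
proof -
  define P where "P B \<longleftrightarrow> finite B \<and> (\<forall>e\<in>B. norm e = 1 \<and> (\<exists>l. h e = l *\<^sub>R e)) \<and> pairwise orthogonal B"
    for B :: "'a set"
  have cardb: "card B < DIM('a) + 1" if "P B" for B
  proof -
    have "0 \<notin> B" using that by (auto simp: P_def)
    hence "independent B" using that by (intro pairwise_orthogonal_independent) (auto simp: P_def)
    thus ?thesis using independent_bound by fastforce
  qed
  have "P {}" by (simp add: P_def)
  then obtain B where PB: "P B" and maxB: "\<And>B'. P B' \<Longrightarrow> card B' \<le> card B"
    using Lattices_Big.ex_has_greatest_nat[of P "{}" card "DIM('a) + 1"] cardb by blast
  have fin: "finite B" and nB: "\<And>e. e \<in> B \<Longrightarrow> norm e = 1" and eB: "\<And>e. e \<in> B \<Longrightarrow> \<exists>l. h e = l *\<^sub>R e"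
    and oB: "pairwise orthogonal B" using PB by (auto simp: P_def)
  have "x = (\<Sum>e\<in>B. inner e x *\<^sub>R e)" for x
  proof (rule ccontr)
    assume ne: "x \<noteq> (\<Sum>e\<in>B. inner e x *\<^sub>R e)"
    define r where "r = x - (\<Sum>e\<in>B. inner e x *\<^sub>R e)"
    have r0: "r \<noteq> 0" using ne by (simp add: r_def)
    have rB: "\<forall>e\<in>B. inner e r = 0"
      using orthonormal_inner_sum[OF fin oB _ nB] by (simp add: r_def inner_diff_right)
    obtain e0 where e0: "\<forall>e\<in>B. inner e e0 = 0" "norm e0 = 1" "\<exists>l. h e0 = l *\<^sub>R e0"
      using eig_ext[OF lin sym eB rB r0] by blast
    have e0B: "e0 \<notin> B"
    proof
      assume "e0 \<in> B"
      hence "inner e0 e0 = 0" using e0(1) by blast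
      thus False using e0(2) by simp
    qed
    have "P (insert e0 B)"
      using PB e0 unfolding P_def pairwise_insert orthogonal_def
      by (auto simp: inner_commute)
    hence "card (insert e0 B) \<le> card B" by (rule maxB)
    thus False using e0B fin by simp
  qed
  thus ?thesis using PB unfolding P_def by blast
qed

lemma sym_matrix_iff:
  fixes A :: "real^'n^'n"
  shows "transpose A = A \<longleftrightarrow> (\<forall>x y. inner x (A *v y) = inner (A *v x) y)"
proof -
  have e: "inner x (A *v y) = inner (transpose A *v x) y" for x y
    by (simp add: dot_lmul_matrix[symmetric])
  show ?thesis
  proof
    assume "transpose A = A" thus "\<forall>x y. inner x (A *v y) = inner (A *v x) y" using e by simp
  next
    assume h: "\<forall>x y. inner x (A *v y) = inner (A *v x) y"
    have "transpose A *v x = A *v x" for x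
    proof -
      have "inner (transpose A *v x - A *v x) y = 0" for y using h e[of x y] by (simp add: inner_diff_left)
      from this[of "transpose A *v x - A *v x"] show ?thesis by simp
    qed
    thus "transpose A = A" by (simp add: matrix_eq)
  qed
qed

lemma psd_matrix_iff:
  "psd_matrix A \<longleftrightarrow> (\<forall>x y. inner x (A *v y) = inner (A *v x) y) \<and> (\<forall>x. 0 \<le> inner x (A *v x))"
  unfolding psd_matrix_def sym_matrix_iff ..

lemma psd_sqrt_exists:
  fixes A :: "real^'n^'n"
  assumes "psd_matrix A"
  shows "\<exists>S. psd_matrix S \<and> S ** S = A"
proof -
  have sym: "\<And>x y. inner x (A *v y) = inner (A *v x) y" and pos: "\<And>x. 0 \<le> inner x (A *v x)"
    using assms by (auto simp: psd_matrix_iff)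
  obtain B where fin: "finite B" and nB: "\<And>e. e\<in>B \<Longrightarrow> norm e = 1"
    and eB: "\<And>e. e\<in>B \<Longrightarrow> \<exists>l. A *v e = l *\<^sub>R e" and oB: "pairwise orthogonal B"
    and rep: "\<And>x. x = (\<Sum>e\<in>B. inner e x *\<^sub>R e)"
    using spectral[of "(*v) A", OF matrix_vector_mul_linear sym] by blast
  define lam where "lam e = inner e (A *v e)" for e
  have lamA: "A *v e = lam e *\<^sub>R e" if eBB: "e \<in> B" for e
  proof -
    obtain l where l: "A *v e = l *\<^sub>R e" using eB[OF eBB] by blast
    have "inner e e = 1" using nB[OF eBB] by (simp add: dot_square_norm)
    hence "lam e = l" by (simp add: lam_def l)
    thus ?thesis using l by simp
  qed
  have lam0: "0 \<le> lam e" for e using pos by (simp add: lam_def)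
  define s where "s x = (\<Sum>e\<in>B. (sqrt (lam e) * inner e x) *\<^sub>R e)" for x
  have lins: "linear s"
    unfolding s_def by (intro linear_compose_sum) (auto intro!: linearI simp: inner_add_right algebra_simps)
  define S where "S = matrix s"
  have Sv: "S *v x = s x" for x unfolding S_def using lins by (simp add: matrix_works)
  have es: "inner e (s x) = sqrt (lam e) * inner e x" if "e \<in> B" for e x
    unfolding s_def using orthonormal_inner_sum[OF fin oB that nB[OF that]] .
  have xs: "inner x (s y) = (\<Sum>e\<in>B. sqrt (lam e) * inner e y * inner e x)" for x y
    unfolding s_def by (simp add: inner_sum_right inner_commute mult_ac)
  have "psd_matrix S"
    unfolding psd_matrix_iff Sv
  proof (intro conjI allI)
    fix x y show "inner x (s y) = inner (s x) y"
      unfolding inner_commute[of "s x" y] xs by (intro sum.cong refl) (simp add: mult_ac)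
  next
    fix x show "0 \<le> inner x (s x)" unfolding xs using lam0 by (intro sum_nonneg) (simp add: mult.assoc)
  qed
  moreover have "S ** S = A"
  proof -
    have "s (s x) = A *v x" for x
    proof -
      have "s (s x) = (\<Sum>e\<in>B. (lam e * inner e x) *\<^sub>R e)"
        unfolding s_def[of "s x"] using lam0
        by (intro sum.cong refl) (simp add: es mult.assoc[symmetric])
      also have "\<dots> = (\<Sum>e\<in>B. inner e x *\<^sub>R (A *v e))"
        by (intro sum.cong refl) (simp add: lamA)
      also have "\<dots> = A *v (\<Sum>e\<in>B. inner e x *\<^sub>R e)"
        by (simp add: matrix_vector_right_distrib matrix_vector_mult_scaleR linear_sum[OF matrix_vector_mul_linear] )
      also have "\<dots> = A *v x" using rep[of x, symmetric] by simp
      finally show ?thesis .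
    qed
    thus ?thesis by (simp add: matrix_eq matrix_vector_mul_assoc[symmetric] Sv)
  qed
  ultimately show ?thesis by blast
qed

lemma psd_sqrt_unique:
  fixes S T :: "real^'n^'n"
  assumes S: "psd_matrix S" and T: "psd_matrix T" and eq: "S ** S = T ** T"
  shows "S = T"
proof (rule ccontr)
  assume ne: "S \<noteq> T"
  have symS: "\<And>x y. inner x (S *v y) = inner (S *v x) y" and posS: "\<And>x. 0 \<le> inner x (S *v x)"
    using S by (auto simp: psd_matrix_iff)
  have symT: "\<And>x y. inner x (T *v y) = inner (T *v x) y" and posT: "\<And>x. 0 \<le> inner x (T *v x)"
    using T by (auto simp: psd_matrix_iff)
  define d where "d x = S *v x - T *v x" for x
  have lind: "linear d" unfolding d_def by (intro linear_compose_sub) auto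
  have symd: "inner x (d y) = inner (d x) y" for x y
    using symS[of x y] symT[of x y] by (simp add: d_def inner_diff_left inner_diff_right)
  obtain B where fin: "finite B" and nB: "\<And>e. e\<in>B \<Longrightarrow> norm e = 1"
    and eB: "\<And>e. e\<in>B \<Longrightarrow> \<exists>l. d e = l *\<^sub>R e"
    and rep: "\<And>x. x = (\<Sum>e\<in>B. inner e x *\<^sub>R e)"
    using spectral[OF lind symd] by blast
  obtain x0 where x0: "S *v x0 \<noteq> T *v x0" using ne by (auto simp: matrix_eq)
  have "\<exists>e\<in>B. d e \<noteq> 0"
  proof (rule ccontr)
    assume "\<not> (\<exists>e\<in>B. d e \<noteq> 0)"
    hence "d (\<Sum>e\<in>B. inner e x0 *\<^sub>R e) = 0"
      by (simp add: linear_sum[OF lind] linear_scale[OF lind])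
    hence "d x0 = 0" using rep[of x0, symmetric] by simp
    thus False using x0 by (simp add: d_def)
  qed
  then obtain e where eBm: "e \<in> B" and de: "d e \<noteq> 0" by blast
  obtain l where l: "d e = l *\<^sub>R e" using eB[OF eBm] by blast
  have l0: "l \<noteq> 0" using de l by auto
  have SS: "S *v (S *v y) = T *v (T *v y)" for y using eq by (simp add: matrix_vector_mul_assoc)
  have "inner e (S *v d e) + inner e (d (T *v e)) = 0"
    using SS[of e] by (simp add: d_def matrix_vector_mult_diff_distrib inner_diff_right)
  moreover have "inner e (S *v d e) = l * inner e (S *v e)" by (simp add: l matrix_vector_mult_scaleR)
  moreover have "inner e (d (T *v e)) = l * inner e (T *v e)" by (simp add: symd l)
  ultimately have "l * (inner e (S *v e) + inner e (T *v e)) = 0" by (simp add: algebra_simps)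
  hence "inner e (S *v e) + inner e (T *v e) = 0" using l0 by simp
  hence z1: "inner e (S *v e) = 0" and z2: "inner e (T *v e) = 0" using posS[of e] posT[of e] by linarith+
  have "S *v e = 0" using psd_kernel[of "(*v) S", OF _ symS posS z1] by simp
  moreover have "T *v e = 0" using psd_kernel[of "(*v) T", OF _ symT posT z2] by simp
  ultimately have "d e = 0" by (simp add: d_def)
  thus False using de by simp
qed

lemma psd_sqrt_props:
  assumes "psd_matrix A"
  shows "psd_matrix (psd_sqrt A) \<and> psd_sqrt A ** psd_sqrt A = A"
proof -
  have "\<exists>!S. psd_matrix S \<and> S ** S = A"
    using psd_sqrt_exists[OF assms] psd_sqrt_unique by metis
  thus ?thesis unfolding psd_sqrt_def by (rule theI')
qed

lemma N_int1: "(\<integral>\<^sup>+y. ennreal (std_normal_density y) \<partial>lborel) = 1"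
proof -
  interpret prob_space std_normal_distribution by (rule prob_space_normal_density) simp
  have "emeasure std_normal_distribution UNIV = 1" using emeasure_space_1 by simp
  thus ?thesis by (simp add: emeasure_density)
qed

lemma N_mgf: "(\<integral>\<^sup>+y. ennreal (std_normal_density y * exp (a*y)) \<partial>lborel) = ennreal (exp (a^2/2))"
proof -
  have eq: "std_normal_density y * exp (a*y) = exp (a^2/2) * std_normal_density (-a + y)" for y
  proof -
    have "exp (- y\<^sup>2 / 2) * exp (a*y) = exp (a^2/2) * exp (-(-a+y)\<^sup>2/2)"
      unfolding mult_exp_exp by (simp add: power2_eq_square field_simps)
    thus ?thesis by (simp add: std_normal_density_def)
  qed
  have "(\<integral>\<^sup>+y. ennreal (std_normal_density y * exp (a*y)) \<partial>lborel)
      = (\<integral>\<^sup>+y. ennreal (exp (a^2/2)) * ennreal (std_normal_density (-a + y)) \<partial>lborel)"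
    by (intro nn_integral_cong) (simp add: eq ennreal_mult)
  also have "\<dots> = ennreal (exp (a^2/2)) * (\<integral>\<^sup>+y. ennreal (std_normal_density (-a + y)) \<partial>lborel)"
    by (rule nn_integral_cmult) simp
  also have "(\<integral>\<^sup>+y. ennreal (std_normal_density (-a + y)) \<partial>lborel) = 1"
    using nn_integral_real_affine[of "\<lambda>y. ennreal (std_normal_density y)" 1 "-a"] N_int1 by simp
  finally show ?thesis by simp
qed

lemma N_chernoff:
  "measure std_normal_distribution {y. c \<le> a*y} \<le> exp (a^2/2 - c)"
proof -
  have "emeasure std_normal_distribution {y. c \<le> a*y}
      = (\<integral>\<^sup>+y. ennreal (std_normal_density y) * indicator {y. c \<le> a*y} y \<partial>lborel)"
    by (subst emeasure_density) (auto simp del: ennreal_indicator)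
  also have "\<dots> \<le> (\<integral>\<^sup>+y. ennreal (std_normal_density y * exp (a*y)) * ennreal (exp (-c)) \<partial>lborel)"
  proof (intro nn_integral_mono)
    fix y
    show "ennreal (std_normal_density y) * indicator {y. c \<le> a*y} y
          \<le> ennreal (std_normal_density y * exp (a*y)) * ennreal (exp (-c))"
    proof (cases "c \<le> a*y")
      case True
      have "1 \<le> exp (a*y - c)" using True by simp
      hence "std_normal_density y * 1 \<le> std_normal_density y * exp (a*y - c)"
        by (intro mult_left_mono) auto
      hence "std_normal_density y \<le> std_normal_density y * exp (a*y) * exp (-c)"
        by (simp add: exp_diff exp_minus divide_inverse mult.assoc)
      hence "ennreal (std_normal_density y) \<le> ennreal (std_normal_density y * exp (a*y) * exp (-c))"
        by (rule ennreal_leI)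
      moreover have "ennreal (std_normal_density y * exp (a*y)) * ennreal (exp (-c)) = ennreal (std_normal_density y * exp (a*y) * exp (-c))"
        by (rule ennreal_mult[symmetric]) auto
      moreover have "indicator {y. c \<le> a*y} y = (1::ennreal)" using True by simp
      ultimately show ?thesis by simp
    next
      case False
      hence "indicator {y. c \<le> a*y} y = (0::ennreal)" by simp
      thus ?thesis by simp
    qed
  qed
  also have "\<dots> = ennreal (exp (a^2/2)) * ennreal (exp (-c))"
    by (subst nn_integral_multc) (simp_all add: N_mgf)
  also have "\<dots> = ennreal (exp (a^2/2) * exp (-c))" by (rule ennreal_mult[symmetric]) auto
  also have "exp (a^2/2) * exp (-c) = exp (a^2/2 - c)" by (simp add: mult_exp_exp)
  finally have le: "emeasure std_normal_distribution {y. c \<le> a*y} \<le> ennreal (exp (a^2/2 - c))" .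
  show ?thesis unfolding measure_def
    using enn2real_mono[OF le] by simp
qed

lemma N_lower:
  assumes t: "0 \<le> t"
  shows "1/2 - t / sqrt (2*pi) \<le> measure std_normal_distribution {t<..}"
proof -
  let ?N = std_normal_distribution
  interpret prob_space ?N by (rule prob_space_normal_density) simp
  have sN: "sets ?N = sets borel" by simp
  have "emeasure ?N {0..} = (\<integral>\<^sup>+y. ennreal (std_normal_density y) * indicator {0..} y \<partial>lborel)"
    by (subst emeasure_density) (auto simp del: ennreal_indicator)
  also have "\<dots> = (\<integral>\<^sup>+y. ennreal (std_normal_density (0 + -1*y)) * indicator {0..} (0 + -1*y) \<partial>lborel)"
    by (subst nn_integral_real_affine[where c="-1" and t=0]) auto
  also have "\<dots> = (\<integral>\<^sup>+y. ennreal (std_normal_density y) * indicator {..0} y \<partial>lborel)"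
  proof (intro nn_integral_cong)
    fix y :: real
    have "std_normal_density (0 + -1*y) = std_normal_density y" by (simp add: std_normal_density_def)
    moreover have "indicator {0..} (0 + -1*y) = (indicator {..0} y :: ennreal)" by (simp split: split_indicator)
    ultimately show "ennreal (std_normal_density (0 + -1*y)) * indicator {0..} (0 + -1*y) = ennreal (std_normal_density y) * indicator {..0} y"
      by simp
  qed
  also have "\<dots> = emeasure ?N {..0}"
    by (subst emeasure_density) (auto simp del: ennreal_indicator)
  finally have "emeasure ?N {0..} = emeasure ?N {..0}" .
  hence sym: "measure ?N {0..} = measure ?N {..0}" by (simp add: measure_def)
  have "1 = measure ?N ({0..} \<union> {..0})"
  proof -
    have "{0..} \<union> {..0} = (UNIV :: real set)" by auto
    thus ?thesis using prob_space by simp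
  qed
  also have "\<dots> \<le> measure ?N {0..} + measure ?N {..0}" by (rule measure_Un_le) auto
  finally have half: "1/2 \<le> measure ?N {0..}" using sym by simp
  have "emeasure ?N {0..t} = (\<integral>\<^sup>+y. ennreal (std_normal_density y) * indicator {0..t} y \<partial>lborel)"
    by (subst emeasure_density) (auto simp del: ennreal_indicator)
  also have "\<dots> \<le> (\<integral>\<^sup>+y. ennreal (1 / sqrt (2*pi)) * indicator {0..t} y \<partial>lborel)"
  proof (intro nn_integral_mono)
    fix y
    have "std_normal_density y \<le> 1 / sqrt (2*pi)"
      unfolding std_normal_density_def by (intro mult_left_le) auto
    thus "ennreal (std_normal_density y) * indicator {0..t} y \<le> ennreal (1 / sqrt (2*pi)) * indicator {0..t} y"
      by (auto split: split_indicator intro: ennreal_leI)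
  qed
  also have "\<dots> = ennreal (1 / sqrt (2*pi)) * ennreal t"
    using t by (subst nn_integral_cmult_indicator) auto
  also have "\<dots> = ennreal (1 / sqrt (2*pi) * t)" by (rule ennreal_mult[symmetric]) (use t in auto)
  also have "1 / sqrt (2*pi) * t = t / sqrt (2*pi)" by simp
  finally have le: "emeasure ?N {0..t} \<le> ennreal (t / sqrt (2*pi))" .
  have m0t: "measure ?N {0..t} \<le> t / sqrt (2*pi)"
    unfolding measure_def using enn2real_mono[OF le] t by simp
  have "{t<..} = {0..} - {0..t}" using t by auto
  hence "measure ?N {t<..} = measure ?N {0..} - measure ?N {0..t}"
    by (simp add: finite_measure_Diff)
  thus ?thesis using half m0t by linarith
qed

lemma integral_lborel_prod:
  fixes k :: "'e::euclidean_space \<Rightarrow> real \<Rightarrow> complex"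
  assumes int: "\<And>b. b \<in> Basis \<Longrightarrow> integrable lborel (k b)"
  shows "(\<integral>x. (\<Prod>b\<in>Basis. k b (x \<bullet> b)) \<partial>(lborel::'e measure)) = (\<Prod>b\<in>Basis. \<integral>y. k b y \<partial>lborel)"
proof -
  interpret product_sigma_finite "\<lambda>_::'e. lborel :: real measure" by standard
  have meas[measurable]: "k b \<in> borel_measurable borel" if "b \<in> Basis" for b
    using borel_measurable_integrable[OF int[OF that]] by simp
  have eq: "(lborel::'e measure) = distr (\<Pi>\<^sub>M b\<in>Basis. lborel) borel (\<lambda>f. \<Sum>b\<in>Basis. f b *\<^sub>R b)"
    by (rule lborel_eq)
  have T: "(\<lambda>f. \<Sum>b\<in>Basis. f b *\<^sub>R b) \<in> measurable (\<Pi>\<^sub>M b\<in>Basis. (lborel::real measure)) (borel :: 'e measure)"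
    by measurable
  have F: "(\<lambda>x. (\<Prod>b\<in>Basis. k b (x \<bullet> b))) \<in> borel_measurable (borel :: 'e measure)"
    by measurable
  have "(\<integral>x. (\<Prod>b\<in>Basis. k b (x \<bullet> b)) \<partial>(lborel::'e measure))
      = (\<integral>f. (\<Prod>b\<in>Basis. k b ((\<Sum>c\<in>Basis. f c *\<^sub>R c) \<bullet> b)) \<partial>(\<Pi>\<^sub>M b\<in>Basis. lborel))"
    by (subst eq) (rule integral_distr[OF T F])
  also have "\<dots> = (\<integral>f. (\<Prod>b\<in>Basis. k b (f b)) \<partial>(\<Pi>\<^sub>M b\<in>Basis. lborel))"
  proof (intro Bochner_Integration.integral_cong refl prod.cong)
    fix f and b :: 'e assume "b \<in> Basis"
    hence "(\<Sum>c\<in>Basis. f c *\<^sub>R c) \<bullet> b = f b"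
      by (simp add: inner_sum_left inner_Basis if_distrib cong: if_cong)
    thus "k b ((\<Sum>c\<in>Basis. f c *\<^sub>R c) \<bullet> b) = k b (f b)" by simp
  qed
  also have "\<dots> = (\<Prod>b\<in>Basis. \<integral>y. k b y \<partial>lborel)"
    by (rule product_integral_prod) (auto intro: int)
  finally show ?thesis .
qed

lemma card_Basis_cart: "card (Basis :: (real^'n) set) = CARD('n)"
  using DIM_cart[where 'a=real and 'b='n] by simp

lemma phi_prod:
  fixes z :: "real^'n"
  shows "(2 * pi) powr (- real CARD('n) / 2) * exp (- (norm z)\<^sup>2 / 2)
        = (\<Prod>b\<in>Basis. std_normal_density (z \<bullet> b))"
proof -
  have n2: "(norm z)\<^sup>2 = (\<Sum>b\<in>Basis. (z \<bullet> b)^2)"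
  proof -
    have "(norm z)\<^sup>2 = z \<bullet> z" by (rule power2_norm_eq_inner)
    also have "\<dots> = (\<Sum>b\<in>Basis. (z \<bullet> b) * (z \<bullet> b))" by (rule euclidean_inner)
    finally show ?thesis by (simp add: power2_eq_square)
  qed
  have e: "exp (- (norm z)\<^sup>2 / 2) = (\<Prod>b\<in>Basis. exp (- (z \<bullet> b)\<^sup>2 / 2))"
    unfolding n2 by (simp add: exp_sum[symmetric] sum_divide_distrib sum_negf)
  have c: "(2 * pi) powr (- real CARD('n) / 2) = (\<Prod>b\<in>(Basis :: (real^'n) set). 1 / sqrt (2*pi))"
  proof -
    have h0: "(\<Prod>b\<in>(Basis :: (real^'n) set). 1 / sqrt (2*pi)) = (1 / sqrt (2*pi)) ^ CARD('n)"
      by (simp add: card_Basis_cart)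
    have h1: "1 / sqrt (2*pi) = (2*pi) powr (-1/2)"
      by (simp add: powr_minus_divide powr_half_sqrt[symmetric])
    have h2: "((2*pi) powr (-1/2)) ^ CARD('n) = (2*pi) powr (real CARD('n) * (-1/2))"
      by (rule powr_power) simp
    have h3: "real CARD('n) * (-1/2) = - real CARD('n) / 2" by simp
    show ?thesis by (simp only: h0) (simp only: h1 h2 h3)
  qed
  have "(\<Prod>b\<in>Basis. std_normal_density (z \<bullet> b)) = (\<Prod>b\<in>Basis. (1 / sqrt (2*pi)) * exp (- (z \<bullet> b)\<^sup>2 / 2))"
    unfolding std_normal_density_def ..
  also have "\<dots> = (\<Prod>b\<in>(Basis :: (real^'n) set). 1 / sqrt (2*pi)) * (\<Prod>b\<in>Basis. exp (- (z \<bullet> b)\<^sup>2 / 2))"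
    by (rule prod.distrib)
  finally show ?thesis unfolding e c by simp
qed

lemma std_gaussian_eq:
  "(std_gaussian :: (real^'n) measure) = density lborel (\<lambda>z::real^'n. ennreal (\<Prod>b\<in>Basis. std_normal_density (z \<bullet> b)))"
  unfolding std_gaussian_def phi_prod ..

lemma sets_std_gaussian[measurable_cong, simp]: "sets (std_gaussian :: (real^'n) measure) = sets borel"
  by (simp add: std_gaussian_def)

lemma space_std_gaussian[simp]: "space (std_gaussian :: (real^'n) measure) = UNIV"
  by (simp add: std_gaussian_def)

lemma meas_inner_sg[measurable]: "(\<lambda>z. u \<bullet> z) \<in> borel_measurable (std_gaussian :: (real^'n) measure)"
  by measurable

lemma prob_space_std_gaussian: "prob_space (std_gaussian :: (real^'n) measure)"
proof
  have "emeasure (std_gaussian::(real^'n) measure) (space std_gaussian)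
      = (\<integral>\<^sup>+z. ennreal (\<Prod>b\<in>Basis. std_normal_density (z \<bullet> b)) \<partial>(lborel::(real^'n) measure))"
    unfolding std_gaussian_eq by (subst emeasure_density) (auto simp del: ennreal_indicator)
  also have "\<dots> = (\<integral>\<^sup>+z. (\<Prod>b\<in>Basis. ennreal (std_normal_density (z \<bullet> b))) \<partial>(lborel::(real^'n) measure))"
    by (intro nn_integral_cong) (simp add: prod_ennreal)
  also have "\<dots> = (\<Prod>b\<in>(Basis::(real^'n) set). \<integral>\<^sup>+y. ennreal (std_normal_density y) \<partial>lborel)"
    by (rule nn_integral_lborel_prod) auto
  also have "\<dots> = 1" by (simp add: N_int1)
  finally show "emeasure (std_gaussian::(real^'n) measure) (space std_gaussian) = 1" .
qed

lemma integrable_N_iexp: "integrable lborel (\<lambda>y. complex_of_real (std_normal_density y) * iexp (s * y))"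
proof -
  interpret prob_space std_normal_distribution by (rule prob_space_normal_density) simp
  have "integrable std_normal_distribution (\<lambda>y. iexp (s * y))"
    by (rule integrable_iexp) auto
  hence "integrable lborel (\<lambda>y. std_normal_density y *\<^sub>R iexp (s * y))"
    by (subst (asm) integrable_density) auto
  thus ?thesis by (simp add: scaleR_conv_of_real)
qed

lemma char_gauss_lin:
  fixes u :: "real^'n"
  shows "char (distr std_gaussian borel (\<lambda>z. u \<bullet> z)) t = complex_of_real (exp (- (t * norm u)\<^sup>2 / 2))"
proof -
  have "char (distr std_gaussian borel (\<lambda>z. u \<bullet> z)) t = (\<integral>z. iexp (t * (u \<bullet> z)) \<partial>std_gaussian)"
    unfolding char_def by (rule integral_distr) (auto intro: meas_inner_sg)
  also have "\<dots> = (\<integral>z. (\<Prod>b\<in>Basis. std_normal_density (z \<bullet> b)) *\<^sub>R iexp (t * (u \<bullet> z)) \<partial>lborel)"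
    unfolding std_gaussian_eq by (rule integral_density) (auto intro!: prod_nonneg)
  also have "\<dots> = (\<integral>z. (\<Prod>b\<in>Basis. (\<lambda>b y. complex_of_real (std_normal_density y) * iexp (t * (u \<bullet> b) * y)) b (z \<bullet> b)) \<partial>lborel)"
  proof (intro Bochner_Integration.integral_cong refl)
    fix z :: "real^'n"
    have "t * (u \<bullet> z) = (\<Sum>b\<in>Basis. t * (u \<bullet> b) * (z \<bullet> b))"
      by (simp add: euclidean_inner[of u z] sum_distrib_left mult.assoc)
    hence "\<i> * complex_of_real (t * (u \<bullet> z)) = (\<Sum>b\<in>Basis. \<i> * complex_of_real (t * (u \<bullet> b) * (z \<bullet> b)))"
      by (simp add: sum_distrib_left)
    hence "iexp (t * (u \<bullet> z)) = (\<Prod>b\<in>Basis. iexp (t * (u \<bullet> b) * (z \<bullet> b)))"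
      by (simp add: exp_sum)
    thus "(\<Prod>b\<in>Basis. std_normal_density (z \<bullet> b)) *\<^sub>R iexp (t * (u \<bullet> z))
        = (\<Prod>b\<in>Basis. (\<lambda>b y. complex_of_real (std_normal_density y) * iexp (t * (u \<bullet> b) * y)) b (z \<bullet> b))"
      by (simp add: scaleR_conv_of_real prod.distrib)
  qed
  also have "\<dots> = (\<Prod>b\<in>Basis. \<integral>y. complex_of_real (std_normal_density y) * iexp (t * (u \<bullet> b) * y) \<partial>lborel)"
    by (rule integral_lborel_prod) (rule integrable_N_iexp)
  also have "\<dots> = (\<Prod>b\<in>Basis. complex_of_real (exp (- (t * (u \<bullet> b))\<^sup>2 / 2)))"
  proof (rule prod.cong[OF refl])
    fix b :: "real^'n"
    have "(\<integral>y. complex_of_real (std_normal_density y) * iexp (t * (u \<bullet> b) * y) \<partial>lborel)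
        = char std_normal_distribution (t * (u \<bullet> b))"
      unfolding char_def by (subst integral_density) (auto simp: scaleR_conv_of_real)
    thus "(\<integral>y. complex_of_real (std_normal_density y) * iexp (t * (u \<bullet> b) * y) \<partial>lborel)
        = complex_of_real (exp (- (t * (u \<bullet> b))\<^sup>2 / 2))"
      by (simp add: char_std_normal_distribution)
  qed
  also have "\<dots> = complex_of_real (exp (- (t * norm u)\<^sup>2 / 2))"
  proof -
    have "(norm u)\<^sup>2 = (\<Sum>b\<in>Basis. (u \<bullet> b) * (u \<bullet> b))"
      by (simp add: power2_norm_eq_inner euclidean_inner[of u u])
    hence "- (t * norm u)\<^sup>2 / 2 = (\<Sum>b\<in>(Basis::(real^'n) set). - (t * (u \<bullet> b))\<^sup>2 / 2)"
      by (simp add: power_mult_distrib sum_divide_distrib sum_negf sum_distrib_left power2_eq_square mult_ac)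
    thus ?thesis by (simp add: exp_sum)
  qed
  finally show ?thesis .
qed

lemma char_N_scale:
  "char (distr std_normal_distribution borel ((*) s)) t = complex_of_real (exp (- (t * s)\<^sup>2 / 2))"
proof -
  have "char (distr std_normal_distribution borel ((*) s)) t = char std_normal_distribution (t * s)"
    unfolding char_def by (subst integral_distr) (auto simp: mult_ac)
  thus ?thesis by (simp add: char_std_normal_distribution)
qed

lemma law_gauss_lin:
  fixes u :: "real^'n"
  shows "distr std_gaussian borel (\<lambda>z. u \<bullet> z) = distr std_normal_distribution borel ((*) (norm u))"
proof (rule Levy_uniqueness)
  interpret G: prob_space "std_gaussian :: (real^'n) measure" by (rule prob_space_std_gaussian)
  interpret N: prob_space std_normal_distribution by (rule prob_space_normal_density) simp
  show "real_distribution (distr std_gaussian borel (\<lambda>z. u \<bullet> z))" by (rule G.real_distribution_distr) (rule meas_inner_sg)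
  show "real_distribution (distr std_normal_distribution borel ((*) (norm u)))" by (rule N.real_distribution_distr) simp
  show "char (distr std_gaussian borel (\<lambda>z. u \<bullet> z)) = char (distr std_normal_distribution borel ((*) (norm u)))"
    by (rule ext) (simp add: char_gauss_lin char_N_scale)
qed

lemma sets_gaussian[simp]: "sets (gaussian \<Sigma>) = sets borel" by (simp add: gaussian_def)
lemma space_gaussian[simp]: "space (gaussian \<Sigma>) = UNIV" by (simp add: gaussian_def)

lemma flip_set_borel:
  fixes g :: "'a::real_normed_vector \<Rightarrow> real"
  assumes [measurable]: "g \<in> borel_measurable borel"
  shows "{v. (c0 + g v > 0) \<noteq> (c0 > (0::real))} \<in> sets borel"
  by measurable

lemma bdist:
  assumes w: "w \<noteq> 0" and c0: "lin_f w b x \<noteq> 0"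
  shows "boundary_dist w b x = \<bar>lin_f w b x\<bar> / norm w"
proof -
  define c0 where "c0 = lin_f w b x"
  define D where "D = {norm r | r. lin_label w b (x + r) \<noteq> lin_label w b x}"
  have flip: "lin_label w b (x + r) \<noteq> lin_label w b x \<longleftrightarrow> (c0 + w \<bullet> r > 0) \<noteq> (c0 > 0)" for r
    by (auto simp: c0_def lin_label_def lin_f_def inner_add_right algebra_simps)
  have nw: "norm w > 0" using w by simp
  have lb: "\<bar>c0\<bar> / norm w \<le> d" if "d \<in> D" for d
  proof -
    obtain r where r: "d = norm r" "(c0 + w \<bullet> r > 0) \<noteq> (c0 > 0)" using \<open>d \<in> D\<close> flip by (auto simp: D_def)
    have "\<bar>c0\<bar> \<le> \<bar>w \<bullet> r\<bar>" using r(2) by auto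
    also have "\<dots> \<le> norm w * norm r" by (rule Cauchy_Schwarz_ineq2)
    finally show ?thesis using nw r(1) by (simp add: divide_simps mult.commute)
  qed
  have ub: "\<exists>d\<in>D. d < \<bar>c0\<bar> / norm w + e" if "e > 0" for e
  proof -
    define r where "r = ((- c0 + (if c0 > 0 then 0 else e * norm w / 2)) / (norm w)^2) *\<^sub>R w"
    have wr: "w \<bullet> r = - c0 + (if c0 > 0 then 0 else e * norm w / 2)"
      using nw by (simp add: r_def power2_norm_eq_inner)
    have "(c0 + w \<bullet> r > 0) \<noteq> (c0 > 0)" using wr that nw by auto
    hence "norm r \<in> D" using flip by (auto simp: D_def)
    moreover have "norm r < \<bar>c0\<bar> / norm w + e"
    proof -
      have "norm r = \<bar>- c0 + (if c0 > 0 then 0 else e * norm w / 2)\<bar> / norm w"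
        using nw by (simp add: r_def power2_eq_square)
      also have "\<dots> \<le> (\<bar>c0\<bar> + e * norm w / 2) / norm w"
      proof (rule divide_right_mono)
        have p: "0 < e * norm w" using nw that by simp
        show "\<bar>- c0 + (if c0 > 0 then 0 else e * norm w / 2)\<bar> \<le> \<bar>c0\<bar> + e * norm w / 2"
          using p by (cases "c0 > 0") (simp_all add: abs_if)
      qed (use nw in simp)
      also have "\<dots> < \<bar>c0\<bar> / norm w + e" using nw that by (simp add: divide_simps)
      finally show ?thesis .
    qed
    ultimately show ?thesis by blast
  qed
  have ne: "D \<noteq> {}" using ub[of 1] by auto
  have bd: "bdd_below D" using lb by (auto simp: bdd_below_def)
  have "\<bar>c0\<bar> / norm w \<le> Inf D" using ne lb by (intro cInf_greatest) auto
  moreover have "Inf D \<le> \<bar>c0\<bar> / norm w"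
  proof (rule ccontr)
    assume "\<not> Inf D \<le> \<bar>c0\<bar> / norm w"
    then obtain d where "d \<in> D" "d < Inf D" using ub[of "Inf D - \<bar>c0\<bar> / norm w"] by auto
    thus False using cInf_lower[OF _ bd] by fastforce
  qed
  ultimately show ?thesis by (simp add: boundary_dist_def D_def c0_def)
qed

lemma flip_measure:
  fixes \<Sigma> :: "real^'n^'n" and w x :: "real^'n"
  assumes psd: "psd_matrix (psd_sqrt \<Sigma>)"
  shows "measure (gaussian \<Sigma>) {v \<in> space (gaussian \<Sigma>). lin_label w b (x + \<alpha> *\<^sub>R v) \<noteq> lin_label w b x}
     = measure std_normal_distribution {y. (lin_f w b x + \<alpha> * (norm (psd_sqrt \<Sigma> *v w) * y) > 0) \<noteq> (lin_f w b x > 0)}"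
proof -
  define S where "S = psd_sqrt \<Sigma>"
  define u where "u = S *v w"
  define c0 where "c0 = lin_f w b x"
  have symS: "inner w (S *v z) = inner u z" for z
  proof -
    have "\<forall>x y. inner x (S *v y) = inner (S *v x) y" using psd unfolding psd_matrix_iff S_def by blast
    thus ?thesis unfolding u_def by blast
  qed
  have A: "{v \<in> space (gaussian \<Sigma>). lin_label w b (x + \<alpha> *\<^sub>R v) \<noteq> lin_label w b x}
      = {v. (c0 + \<alpha> * (w \<bullet> v) > 0) \<noteq> (c0 > 0)}"
    by (auto simp: c0_def lin_label_def lin_f_def inner_add_right algebra_simps)
  have Am: "{v::real^'n. (c0 + \<alpha> * (w \<bullet> v) > 0) \<noteq> (c0 > 0)} \<in> sets borel"
    by (rule flip_set_borel) measurable
  have Bm: "{y::real. (c0 + \<alpha> * y > 0) \<noteq> (c0 > 0)} \<in> sets borel"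
    by (rule flip_set_borel) measurable
  have mS: "(\<lambda>z. S *v z) \<in> measurable (std_gaussian :: (real^'n) measure) borel"
  proof -
    have "continuous_on UNIV (\<lambda>z::real^'n. S *v z)"
      by (intro linear_continuous_on matrix_vector_mul_bounded_linear)
    hence "(\<lambda>z. S *v z) \<in> borel_measurable (borel :: (real^'n) measure)"
      by (rule borel_measurable_continuous_onI)
    moreover have "measurable (std_gaussian :: (real^'n) measure) (borel :: (real^'n) measure) = measurable borel borel"
      by (rule measurable_cong_sets) simp_all
    ultimately show ?thesis by simp
  qed
  have mu: "(\<lambda>z. u \<bullet> z) \<in> measurable (std_gaussian :: (real^'n) measure) borel"
    by (rule meas_inner_sg)
  have "measure (gaussian \<Sigma>) {v. (c0 + \<alpha> * (w \<bullet> v) > 0) \<noteq> (c0 > 0)}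
      = measure std_gaussian ((\<lambda>z. S *v z) -` {v. (c0 + \<alpha> * (w \<bullet> v) > 0) \<noteq> (c0 > 0)} \<inter> space std_gaussian)"
    unfolding gaussian_def S_def[symmetric] by (rule measure_distr[OF mS Am])
  also have "(\<lambda>z. S *v z) -` {v. (c0 + \<alpha> * (w \<bullet> v) > 0) \<noteq> (c0 > 0)} \<inter> space std_gaussian
      = (\<lambda>z. u \<bullet> z) -` {y. (c0 + \<alpha> * y > 0) \<noteq> (c0 > 0)} \<inter> space std_gaussian"
    by (auto simp: symS)
  also have "measure std_gaussian \<dots> = measure (distr std_gaussian borel (\<lambda>z. u \<bullet> z)) {y. (c0 + \<alpha> * y > 0) \<noteq> (c0 > 0)}"
    by (rule measure_distr[OF mu Bm, symmetric])
  also have "\<dots> = measure (distr std_normal_distribution borel ((*) (norm u))) {y. (c0 + \<alpha> * y > 0) \<noteq> (c0 > 0)}"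
    by (simp add: law_gauss_lin)
  also have "\<dots> = measure std_normal_distribution ((*) (norm u) -` {y. (c0 + \<alpha> * y > 0) \<noteq> (c0 > 0)} \<inter> space std_normal_distribution)"
    by (rule measure_distr[OF _ Bm]) measurable
  also have "(*) (norm u) -` {y. (c0 + \<alpha> * y > 0) \<noteq> (c0 > 0)} \<inter> space std_normal_distribution
      = {y. (c0 + \<alpha> * (norm u * y) > 0) \<noteq> (c0 > 0)}" by auto
  finally show ?thesis unfolding A by (simp add: c0_def u_def S_def)
qed

lemma numeric_lower:
  assumes "0 < \<epsilon>" "\<epsilon> < 1/3"
  shows "\<epsilon> \<le> 1/2 - sqrt (1 - sqrt (3*\<epsilon>)) / sqrt (2*pi)"
proof -
  define q where "q = sqrt (3*\<epsilon>)"
  have q: "0 < q" "q < 1" using assms by (auto simp: q_def real_sqrt_less_iff)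
  have q2: "q^2 = 3*\<epsilon>" using assms by (simp add: q_def)
  define u where "u = sqrt (1 - q)"
  have u: "0 \<le> u" "u \<le> 1" "u^2 = 1 - q" using q by (auto simp: u_def)
  have sp: "12/5 \<le> sqrt (2*pi)"
  proof (rule real_le_rsqrt)
    have "(12/5::real)^2 = 144/25" by (simp add: power2_eq_square)
    thus "(12/5::real)^2 \<le> 2 * pi" using pi_gt3 by linarith
  qed
  have "u / sqrt (2*pi) \<le> u / (12/5)"
    using sp u by (intro divide_left_mono) auto
  hence f1: "u / sqrt (2*pi) \<le> 5*u/12" by simp
  have f0: "(1 - u^2)^2 / 3 \<le> 1/2 - 5*u/12"
  proof -
    have h1: "u^4 \<le> u^2"
    proof -
      have "u^2 \<le> 1" using u(3) q(1) by linarith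
      hence "u^2 * u^2 \<le> 1 * u^2" by (intro mult_right_mono) auto
      thus ?thesis by (simp add: power2_eq_square power4_eq_xxxx)
    qed
    have h2: "0 \<le> u^2 - 5/4*u + 25/64"
    proof -
      have "0 \<le> (u - 5/8)^2" by simp
      also have "(u - 5/8)^2 = u^2 - 5/4*u + 25/64" by (simp add: power2_eq_square algebra_simps)
      finally show ?thesis .
    qed
    have h3: "(1 - u^2)^2 = 1 - 2*u^2 + u^4" by (simp add: power2_eq_square power4_eq_xxxx algebra_simps)
    show ?thesis unfolding h3 using h1 h2 by (simp add: field_simps)
  qed
  have f2: "\<epsilon> = (1 - u^2)^2 / 3" using q2 u by simp
  have "\<epsilon> \<le> 1/2 - u / sqrt (2*pi)" using f0 f1 f2 by linarith
  thus ?thesis unfolding u_def q_def .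
qed

theorem theorem2:
  fixes \<Sigma> :: "real^'n^'n" and w x :: "real^'n" and b \<epsilon> :: real
  assumes "psd_matrix \<Sigma>" and "trace \<Sigma> = 1"
    and "w \<noteq> 0" and "lin_f w b x \<noteq> 0"
    and "0 < \<epsilon>" and "\<epsilon> < 1/3"
  shows "ereal (sqrt (1 / (2 * ln (1 / \<epsilon>)))) * efrac (ereal (norm w)) (norm (psd_sqrt \<Sigma> *v w))
           \<le> efrac (noise_radius w b \<Sigma> \<epsilon> x) (boundary_dist w b x)
      \<and> efrac (noise_radius w b \<Sigma> \<epsilon> x) (boundary_dist w b x)
           \<le> ereal (sqrt (1 / (1 - sqrt (3 * \<epsilon>)))) * efrac (ereal (norm w)) (norm (psd_sqrt \<Sigma> *v w))"
proof -
  have psdS: "psd_matrix (psd_sqrt \<Sigma>)" using psd_sqrt_props[OF assms(1)] by simp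
  define \<sigma> where "\<sigma> = norm (psd_sqrt \<Sigma> *v w)"
  define c0 where "c0 = lin_f w b x"
  define c where "c = \<bar>c0\<bar>"
  have cpos: "c > 0" using assms(4) by (simp add: c_def c0_def)
  have nw: "norm w > 0" using assms(3) by simp
  define F where "F \<alpha> = measure std_normal_distribution {y. (c0 + \<alpha> * (\<sigma> * y) > 0) \<noteq> (c0 > 0)}" for \<alpha>
  have NR: "noise_radius w b \<Sigma> \<epsilon> x = Inf {ereal \<bar>\<alpha>\<bar> | \<alpha>. \<epsilon> \<le> F \<alpha>}"
    unfolding noise_radius_def F_def flip_measure[OF psdS] c0_def \<sigma>_def ..
  have BD: "boundary_dist w b x = c / norm w" using bdist[OF assms(3,4)] by (simp add: c_def c0_def)
  have dpos: "c / norm w > 0" using cpos nw by simp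
  have lg: "ln (1/\<epsilon>) > 0" using assms(5,6) by simp
  define t1 where "t1 = sqrt (2 * ln (1/\<epsilon>))"
  have t1: "t1 > 0" "t1^2 = 2 * ln (1/\<epsilon>)" using lg by (auto simp: t1_def)
  have a1: "sqrt (1 / (2 * ln (1 / \<epsilon>))) = 1 / t1" by (simp add: t1_def real_sqrt_divide)
  define t0 where "t0 = sqrt (1 - sqrt (3 * \<epsilon>))"
  have s3: "sqrt (3 * \<epsilon>) < 1" using assms(5,6) by (simp add: real_sqrt_less_iff)
  have t0: "t0 > 0" using s3 by (simp add: t0_def)
  have a2: "sqrt (1 / (1 - sqrt (3 * \<epsilon>))) = 1 / t0" by (simp add: t0_def real_sqrt_divide)
  have a1p: "1 / t1 > 0" and a2p: "1 / t0 > 0" using t1 t0 by auto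
  show ?thesis
  proof (cases "\<sigma> = 0")
    case True
    have "F \<alpha> = 0" for \<alpha> by (simp add: F_def True)
    hence "{ereal \<bar>\<alpha>\<bar> | \<alpha>. \<epsilon> \<le> F \<alpha>} = {}" using assms(5) by auto
    hence "noise_radius w b \<Sigma> \<epsilon> x = \<infinity>" by (simp add: NR top_ereal_def)
    hence e1: "efrac (noise_radius w b \<Sigma> \<epsilon> x) (boundary_dist w b x) = \<infinity>"
      using dpos by (simp add: efrac_def BD)
    have e2: "efrac (ereal (norm w)) (norm (psd_sqrt \<Sigma> *v w)) = \<infinity>"
      using True by (simp add: efrac_def \<sigma>_def)
    show ?thesis unfolding e1 e2 a1 a2 using a1p a2p by simp
  next
    case False
    hence sp: "\<sigma> > 0" by (simp add: \<sigma>_def)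
    have low: "c / (\<sigma> * t1) \<le> \<bar>\<alpha>\<bar>" if "\<epsilon> \<le> F \<alpha>" for \<alpha>
    proof (rule ccontr)
      assume "\<not> c / (\<sigma> * t1) \<le> \<bar>\<alpha>\<bar>"
      hence lt: "\<bar>\<alpha>\<bar> < c / (\<sigma> * t1)" by simp
      show False
      proof (cases "\<alpha> = 0")
        case True
        hence "F \<alpha> = 0" by (simp add: F_def)
        thus False using that assms(5) by simp
      next
        case False
        define a where "a = (if c0 > 0 then - (\<alpha> * \<sigma>) else \<alpha> * \<sigma>)"
        have aa: "\<bar>a\<bar> = \<bar>\<alpha>\<bar> * \<sigma>" using sp by (simp add: a_def abs_mult)
        have a0: "a \<noteq> 0" using False sp by (simp add: a_def)
        have sub: "{y. (c0 + \<alpha> * (\<sigma> * y) > 0) \<noteq> (c0 > 0)} \<subseteq> {y. c*c/a^2 \<le> (c/a) * y}"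
        proof
          fix y assume "y \<in> {y. (c0 + \<alpha> * (\<sigma> * y) > 0) \<noteq> (c0 > 0)}"
          hence "c \<le> a * y" by (cases "c0 > 0") (auto simp: a_def c_def algebra_simps)
          hence "(c / a^2) * c \<le> (c / a^2) * (a * y)" using cpos a0 by (intro mult_left_mono) auto
          thus "y \<in> {y. c*c/a^2 \<le> (c/a) * y}" using a0 by (simp add: power2_eq_square field_simps)
        qed
        interpret N: prob_space std_normal_distribution by (rule prob_space_normal_density) simp
        have "F \<alpha> \<le> measure std_normal_distribution {y. c*c/a^2 \<le> (c/a) * y}"
          unfolding F_def by (rule N.finite_measure_mono[OF sub]) simp
        also have "\<dots> \<le> exp ((c/a)^2/2 - c*c/a^2)" by (rule N_chernoff)
        also have "(c/a)^2/2 - c*c/a^2 = - ((c/a)^2/2)" by (simp add: power2_eq_square field_simps)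
        also have "exp (- ((c/a)^2/2)) < exp (- ln (1/\<epsilon>))"
        proof -
          have "t1 < c / \<bar>a\<bar>" using lt aa sp t1 cpos False by (simp add: field_simps)
          hence "t1^2 < (c / \<bar>a\<bar>)^2" using t1 by (intro power_strict_mono) auto
          hence "2 * ln (1/\<epsilon>) < (c/a)^2" using t1 by (simp add: power_divide)
          thus ?thesis by simp
        qed
        also have "exp (- ln (1/\<epsilon>)) = \<epsilon>" using assms(5) by (simp add: ln_div)
        finally show False using that by simp
      qed
    qed
    define \<alpha>0 where "\<alpha>0 = (if c0 > 0 then -1 else 1) * (c / (\<sigma> * t0))"
    have abs0: "\<bar>\<alpha>0\<bar> = c / (\<sigma> * t0)" using cpos sp t0 by (simp add: \<alpha>0_def abs_mult)
    have high: "\<epsilon> \<le> F \<alpha>0"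
    proof -
      have sub: "{t0<..} \<subseteq> {y. (c0 + \<alpha>0 * (\<sigma> * y) > 0) \<noteq> (c0 > 0)}"
      proof
        fix y assume "y \<in> {t0<..}"
        hence y: "t0 < y" by simp
        have e: "\<alpha>0 * (\<sigma> * y) = (if c0 > 0 then -1 else 1) * (c * (y / t0))"
          using sp t0 by (simp add: \<alpha>0_def field_simps)
        have cy: "c < c * (y / t0)" using y t0 cpos by (simp add: field_simps)
        show "y \<in> {y. (c0 + \<alpha>0 * (\<sigma> * y) > 0) \<noteq> (c0 > 0)}"
        proof (cases "c0 > 0")
          case True
          hence "c0 + \<alpha>0 * (\<sigma> * y) = c0 - c0 * (y / t0)" using e by (simp add: c_def)
          also have "\<dots> < 0" using cy True by (simp add: c_def)
          finally show ?thesis using True by simp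
        next
          case False
          hence "c0 + \<alpha>0 * (\<sigma> * y) = c * (y / t0) - c" using e by (simp add: c_def)
          also have "\<dots> > 0" using cy by simp
          finally show ?thesis using False by simp
        qed
      qed
      interpret N: prob_space std_normal_distribution by (rule prob_space_normal_density) simp
      have "\<epsilon> \<le> 1/2 - t0 / sqrt (2*pi)" unfolding t0_def by (rule numeric_lower[OF assms(5,6)])
      also have "\<dots> \<le> measure std_normal_distribution {t0<..}" using t0 by (intro N_lower) simp
      also have "\<dots> \<le> F \<alpha>0" unfolding F_def by (rule N.finite_measure_mono[OF sub]) simp
      finally show ?thesis .
    qed
    define A where "A = {ereal \<bar>\<alpha>\<bar> | \<alpha>. \<epsilon> \<le> F \<alpha>}"
    have r1: "ereal (c / (\<sigma> * t1)) \<le> Inf A"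
      by (rule Inf_greatest) (auto simp: A_def intro: low)
    have r2: "Inf A \<le> ereal (c / (\<sigma> * t0))"
      unfolding abs0[symmetric] by (rule Inf_lower) (auto simp: A_def intro: high)
    obtain \<rho> where rho: "Inf A = ereal \<rho>" using r1 r2 by (cases "Inf A") auto
    have rb: "c / (\<sigma> * t1) \<le> \<rho>" "\<rho> \<le> c / (\<sigma> * t0)" using r1 r2 rho by auto
    have e1: "efrac (noise_radius w b \<Sigma> \<epsilon> x) (boundary_dist w b x) = ereal (\<rho> * norm w / c)"
      using dpos cpos nw by (simp add: efrac_def NR A_def[symmetric] rho BD)
    have e2: "efrac (ereal (norm w)) (norm (psd_sqrt \<Sigma> *v w)) = ereal (norm w / \<sigma>)"
      using sp by (simp add: efrac_def \<sigma>_def[symmetric])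
    have i1: "1 / t1 * (norm w / \<sigma>) \<le> \<rho> * norm w / c"
    proof -
      have "1 / t1 * (norm w / \<sigma>) = (c / (\<sigma> * t1)) * norm w / c" using cpos by (simp add: field_simps)
      also have "\<dots> \<le> \<rho> * norm w / c" using rb(1) nw cpos by (intro divide_right_mono mult_right_mono) auto
      finally show ?thesis .
    qed
    have i2: "\<rho> * norm w / c \<le> 1 / t0 * (norm w / \<sigma>)"
    proof -
      have "\<rho> * norm w / c \<le> (c / (\<sigma> * t0)) * norm w / c" using rb(2) nw cpos by (intro divide_right_mono mult_right_mono) auto
      also have "\<dots> = 1 / t0 * (norm w / \<sigma>)" using cpos by (simp add: field_simps)
      finally show ?thesis .
    qed
    show ?thesis unfolding e1 e2 a1 a2 using i1 i2 by simp
  qed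
qed

end
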